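(* Let $a<b$ and let $f,g:[a,b]\to\mathbb{R}$ be differentiable on $[a,b]$ (one-sided derivatives at the endpoints), and suppose $f$ and $g$ are twice differentiable at the point $a$ (from the right). Suppose $g(a)\neq g(b)$ and put $K=\frac{f(b)-f(a)}{g(b)-g(a)}$. If $$\bigl[f'(a)-K\,g'(a)\bigr]\cdot\bigl[f''(a)-K\,g''(a)\bigr]> 0,$$ then there exists $\xi\in(a,b)$ such that $$f'(a)-\frac{f(\xi)-f(a)}{\xi-a}=K\left[g'(a)-\frac{g(\xi)-g(a)}{\xi-a}\right].$$
   Context: Differentiability on a closed interval $[a,b]$ means differentiability on $(a,b)$ together with existence of the one-sided derivatives at $a$ and $b$. *)

theory Defs
  imports "HOL-Analysis.Analysis"
begin

end

theory Submission
  imports Defs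
begin

lemma core:
  fixes h h' :: "real \<Rightarrow> real" and h2 a b :: real
  assumes ab: "a < b"
    and dh: "\<And>x. x \<in> {a..b} \<Longrightarrow> (h has_real_derivative h' x) (at x within {a..b})"
    and dh2: "(h' has_real_derivative h2) (at a within {a..b})"
    and hb: "h b = h a" and p1: "h' a > 0" and p2: "h2 > 0"
  shows "\<exists>\<xi>\<in>{a<..<b}. h' a = (h \<xi> - h a) / (\<xi> - a)"
proof -
  have "((\<lambda>y. (h' y - h' a) / (y - a)) \<longlongrightarrow> h2) (at a within {a..b})"
    using dh2 by (simp add: has_field_derivative_iff)
  then have "eventually (\<lambda>y. (h' y - h' a) / (y - a) > 0) (at a within {a..b})"
    using p2 by (simp add: order_tendstoD(1))
  then obtain d where d: "d > 0" and dP: "\<And>y. y \<in> {a..b} \<Longrightarrow> y \<noteq> a \<Longrightarrow> dist y a < d \<Longrightarrow> (h' y - h' a) / (y - a) > 0"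
    unfolding eventually_at by blast
  define x0 where "x0 = min (a + d/2) ((a+b)/2)"
  have x0: "a < x0" "x0 < b" "x0 - a < d" using ab d unfolding x0_def by (auto simp: min_def)
  have gt: "h' t > h' a" if "a < t" "t \<le> x0" for t
  proof -
    have "(h' t - h' a) / (t - a) > 0" using dP[of t] that x0 by (auto simp: dist_real_def)
    then show ?thesis using that by (simp add: zero_less_divide_iff)
  qed
  have "\<exists>t\<in>{a<..<x0}. h x0 - h a = (\<lambda>u. h' t * u) (x0 - a)"
  proof (rule mvt_simple[OF x0(1)])
    fix u assume "a \<le> u" "u \<le> x0"
    then have "(h has_real_derivative h' u) (at u within {a..x0})"
      using x0 by (intro has_field_derivative_subset[OF dh]) auto
    then show "(h has_derivative (\<lambda>v. h' u * v)) (at u within {a..x0})"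
      by (simp add: has_field_derivative_def)
  qed
  then obtain t where t: "a < t" "t < x0" "h x0 - h a = (x0 - a) * h' t" by (auto simp: mult.commute)
  define \<phi> where "\<phi> x = (h x - h a) / (x - a)" for x
  have "\<phi> x0 > h' a"
    using gt[of t] t x0 unfolding \<phi>_def by (simp add: pos_less_divide_eq mult.commute)
  moreover have "\<phi> b = 0" unfolding \<phi>_def using hb by simp
  moreover have "continuous_on {x0..b} \<phi>"
  proof -
    have "continuous_on {a..b} h" by (rule DERIV_continuous_on[OF dh])
    then have "continuous_on {x0..b} h" by (rule continuous_on_subset) (use x0 in auto)
    then show ?thesis unfolding \<phi>_def using x0
      by (intro continuous_intros) auto
  qed
  ultimately obtain \<xi> where xi: "x0 \<le> \<xi>" "\<xi> \<le> b" "\<phi> \<xi> = h' a"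
    using IVT2'[of \<phi> b "h' a" x0] x0 p1 by force
  have "\<xi> \<noteq> b" using xi \<open>\<phi> b = 0\<close> p1 by auto
  then show ?thesis using xi x0 unfolding \<phi>_def by (intro bexI[of _ \<xi>]) auto
qed

theorem mainTheorem3:
  fixes f g f' g' :: "real \<Rightarrow> real" and f2 g2 a b :: real
  assumes "a < b"
    and "\<And>x. x \<in> {a..b} \<Longrightarrow> (f has_real_derivative f' x) (at x within {a..b})"
    and "\<And>x. x \<in> {a..b} \<Longrightarrow> (g has_real_derivative g' x) (at x within {a..b})"
    and "(f' has_real_derivative f2) (at a within {a..b})"
    and "(g' has_real_derivative g2) (at a within {a..b})"
    and "g a \<noteq> g b"
    and "(f' a - ((f b - f a) / (g b - g a)) * g' a) * (f2 - ((f b - f a) / (g b - g a)) * g2) > 0"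
  shows "\<exists>\<xi>\<in>{a<..<b}. f' a - (f \<xi> - f a) / (\<xi> - a)
           = ((f b - f a) / (g b - g a)) * (g' a - (g \<xi> - g a) / (\<xi> - a))"
proof -
  define K where "K = (f b - f a) / (g b - g a)"
  have hb: "f b - K * g b = f a - K * g a"
    using assms(6) unfolding K_def by (simp add: field_simps)
  have eq: "f' a - (f \<xi> - f a) / (\<xi> - a) = K * (g' a - (g \<xi> - g a) / (\<xi> - a))"
    if "(f' a - K * g' a) = ((f \<xi> - K * g \<xi>) - (f a - K * g a)) / (\<xi> - a)" for \<xi>
  proof -
    have "((f \<xi> - K * g \<xi>) - (f a - K * g a)) / (\<xi> - a) = (f \<xi> - f a) / (\<xi> - a) - K * ((g \<xi> - g a) / (\<xi> - a))"
      by (simp add: diff_divide_distrib right_diff_distrib)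
    then show ?thesis using that by (simp add: algebra_simps)
  qed
  have dh: "\<And>x. x \<in> {a..b} \<Longrightarrow> ((\<lambda>x. f x - K * g x) has_real_derivative (f' x - K * g' x)) (at x within {a..b})"
    using assms(2,3) by (auto intro!: derivative_eq_intros)
  have dh2: "((\<lambda>x. f' x - K * g' x) has_real_derivative (f2 - K * g2)) (at a within {a..b})"
    using assms(4,5) by (auto intro!: derivative_eq_intros)
  have dhn: "\<And>x. x \<in> {a..b} \<Longrightarrow> ((\<lambda>x. - (f x - K * g x)) has_real_derivative (- (f' x - K * g' x))) (at x within {a..b})"
    using dh by (rule DERIV_minus)
  have dh2n: "((\<lambda>x. - (f' x - K * g' x)) has_real_derivative (- (f2 - K * g2))) (at a within {a..b})"
    using dh2 by (rule DERIV_minus)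
  have pos: "(f' a - K * g' a) * (f2 - K * g2) > 0" using assms(7) unfolding K_def .
  show ?thesis
  proof (cases "f' a - K * g' a > 0")
    case True
    then have "f2 - K * g2 > 0" using pos by (simp add: zero_less_mult_iff)
    then obtain \<xi> where "\<xi> \<in> {a<..<b}" "(f' a - K * g' a) = ((f \<xi> - K * g \<xi>) - (f a - K * g a)) / (\<xi> - a)"
      using core[OF assms(1) dh dh2 hb True] by auto
    then show ?thesis using eq unfolding K_def by blast
  next
    case False
    then have n1: "- (f' a - K * g' a) > 0" using pos by (cases "f' a - K * g' a = 0") auto
    then have "- (f2 - K * g2) > 0" using pos by (simp add: zero_less_mult_iff)
    moreover have "- (f b - K * g b) = - (f a - K * g a)" using hb by simp
    ultimately obtain \<xi> where xi: "\<xi> \<in> {a<..<b}" "- (f' a - K * g' a) = (- (f \<xi> - K * g \<xi>) - - (f a - K * g a)) / (\<xi> - a)"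
      using core[OF assms(1) dhn dh2n] n1 by auto
    have "(f' a - K * g' a) = ((f \<xi> - K * g \<xi>) - (f a - K * g a)) / (\<xi> - a)"
    proof -
      have "(- (f \<xi> - K * g \<xi>) - - (f a - K * g a)) / (\<xi> - a) = - (((f \<xi> - K * g \<xi>) - (f a - K * g a)) / (\<xi> - a))"
        unfolding minus_divide_left by (rule arg_cong[where f="\<lambda>z. z / (\<xi> - a)"]) simp
      then show ?thesis using xi(2) by simp
    qed
    then show ?thesis using eq xi(1) unfolding K_def by blast
  qed
qed

end
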